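(* Let $n$ and $d$ be positive integers. Suppose there is a prime $q$ with $n/(d+1)<q<n/d$ and a prime power $p^a$ ($p$ prime, $a\ge1$) dividing $n$ such that $n-dq<p^a$. Then $n$ satisfies the $N$-variation of Condition 1 with $N=2+\lfloor d/2\rfloor$.
   Context: A positive integer $n$ satisfies the $N$-variation of Condition 1 if there exist $N$ different primes $p_1,\dots,p_N$ such that for every $1\le k\le n-1$, $\binom{n}{k}$ is divisible by at least one of $p_1,\dots,p_N$. *)

theory Defs
  imports Complex_Main "HOL-Computational_Algebra.Primes"
begin

definition condition1_var :: "nat \<Rightarrow> nat \<Rightarrow> bool" where
  "condition1_var N n \<longleftrightarrow>
     (\<exists>P :: nat set. finite P \<and> card P = N \<and> (\<forall>p\<in>P. prime p) \<and>
        (\<forall>k. 1 \<le> k \<and> k \<le> n - 1 \<longrightarrow> (\<exists>p\<in>P. p dvd (n choose k))))"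

end

theory Submission
  imports Defs
begin

lemma dvd_binom_pow:
  fixes p a n k :: nat
  assumes "prime p" "p ^ a dvd n" "\<not> p ^ a dvd k"
  shows "p dvd (n choose k)"
proof (rule ccontr)
  assume np: "\<not> p dvd (n choose k)"
  have k0: "k \<noteq> 0" using assms(3) by (metis dvd_0_right)
  then obtain k' where k': "k = Suc k'" by (cases k) auto
  show False
  proof (cases n)
    case 0
    then show ?thesis using np k' by simp
  next
    case (Suc n')
    have "k * (n choose k) = n * (n' choose k')"
      using Suc_times_binomial[of k' n'] Suc k' by simp
    hence "p ^ a dvd k * (n choose k)" using assms(2) by (metis dvd_mult2)
    moreover have "coprime (p ^ a) (n choose k)"
      using np assms(1) by (simp add: prime_imp_coprime)
    ultimately have "p ^ a dvd k" by (simp add: coprime_dvd_mult_left_iff)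
    with assms(3) show False by simp
  qed
qed

lemma dvd_binom_mod:
  fixes q n k :: nat
  assumes "prime q" "n mod q < k mod q"
  shows "q dvd (n choose k)"
  using assms(2)
proof (induction n arbitrary: k)
  case 0
  then have "k \<noteq> 0" by (metis mod_0 not_less0)
  then show ?case by (cases k) simp_all
next
  case (Suc n)
  have q1: "q > 1" using assms(1) prime_gt_1_nat by blast
  have k0: "k \<noteq> 0" using Suc.prems by (metis gr_implies_not0 mod_0)
  then obtain k' where k': "k = Suc k'" by (cases k) auto
  show ?case
  proof (cases "Suc n mod q = 0")
    case True
    have "q ^ 1 dvd Suc n" using True by auto
    moreover have "\<not> q ^ 1 dvd k" using Suc.prems True by auto
    ultimately show ?thesis using dvd_binom_pow[OF assms(1)] by blast
  next
    case False
    have e1: "Suc n mod q = Suc (n mod q)" using False by (metis mod_Suc)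
    have "k mod q \<noteq> 0" using Suc.prems by auto
    hence e2: "k mod q = Suc (k' mod q)" using k' by (metis mod_Suc)
    have "n mod q < k' mod q" using Suc.prems e1 e2 by simp
    hence A: "q dvd (n choose k')" by (rule Suc.IH)
    have "n mod q < k mod q" using Suc.prems e1 by simp
    hence B: "q dvd (n choose k)" by (rule Suc.IH)
    show ?thesis using A B k' by simp
  qed
qed

lemma extend_primes:
  fixes S :: "nat set"
  assumes "finite S" "\<forall>x\<in>S. prime x" "card S \<le> N"
  shows "\<exists>P. finite P \<and> card P = N \<and> S \<subseteq> P \<and> (\<forall>p\<in>P. prime p)"
proof -
  have "infinite ({p::nat. prime p} - S)"
    using primes_infinite assms(1) by (simp add: Diff_infinite_finite)
  then obtain B where B: "B \<subseteq> {p::nat. prime p} - S" "finite B" "card B = N - card S"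
    using infinite_arbitrarily_large by blast
  have "card (S \<union> B) = card S + card B"
    using B assms(1) by (subst card_Un_disjoint) auto
  then show ?thesis using B assms by (intro exI[of _ "S \<union> B"]) auto
qed

lemma binom_ne1:
  fixes n k :: nat
  assumes "1 \<le> k" "k < n"
  shows "n choose k \<noteq> 1"
proof
  assume h: "n choose k = 1"
  obtain k' where k': "k = Suc k'" using assms by (cases k) auto
  obtain n' where n': "n = Suc n'" using assms by (cases n) auto
  have "k * (n choose k) = n * (n' choose k')"
    using Suc_times_binomial[of k' n'] n' k' by simp
  moreover have "(n' choose k') > 0" using assms k' n' by (intro zero_less_binomial) simp
  ultimately have "k = n * (n' choose k')" using h by simp
  hence "k \<ge> n" using \<open>(n' choose k') > 0\<close> by (metis mult_le_mono2 mult_1_right Suc_leI One_nat_def)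
  with assms show False by simp
qed

theorem mainTheorem14:
  fixes n d q p a :: nat
  assumes "n > 0" and "d > 0"
    and "prime q"
    and "real n / real (d + 1) < real q" and "real q < real n / real d"
    and "prime p" and "a \<ge> 1" and "p ^ a dvd n"
    and "int n - int d * int q < int (p ^ a)"
  shows "condition1_var (2 + d div 2) n"
proof -
  have q0: "q > 0" using assms(3) prime_gt_0_nat by blast
  have "real n < real q * real (d+1)" using assms(4) by (simp add: divide_less_eq)
  hence "real n < real (q * (d+1))" by (simp add: algebra_simps)
  hence lt1: "n < q * Suc d" by (simp only: of_nat_less_iff Suc_eq_plus1)
  have "real q * real d < real n" using assms(5) assms(2) by (simp add: less_divide_eq)
  hence "real (q * d) < real n" by simp
  hence lt2: "q * d < n" by (simp only: of_nat_less_iff)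
  define r where "r = n mod q"
  have nd: "n div q = d"
    using lt1 lt2 by (intro div_nat_eqI) simp_all
  have "n = n div q * q + n mod q" by simp
  hence ndr: "n = d * q + r" using nd r_def by simp
  have rq: "r < q" using r_def q0 by simp
  have "int n = int d * int q + int r" using ndr by (metis of_nat_add of_nat_mult)
  hence "int r < int (p ^ a)" using assms(9) by linarith
  hence rp: "r < p ^ a" by (simp only: of_nat_less_iff)
  define B where "B = {k. 1 \<le> k \<and> k \<le> n - 1 \<and> p ^ a dvd k \<and> k mod q \<le> r}"
  have F0: "k div q \<ge> 1" if "k \<in> B" for k
  proof (rule ccontr)
    assume "\<not> k div q \<ge> 1"
    hence "k div q = 0" by simp
    hence "k = k mod q" by (metis add_0 div_mult_mod_eq mult_0)
    hence "k < p ^ a" using that rp unfolding B_def by auto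
    moreover have "p ^ a dvd k" "k \<ge> 1" using that unfolding B_def by auto
    ultimately show False by (simp add: nat_dvd_not_less)
  qed
  have F1: "n - k \<in> B \<and> (n - k) div q = d - k div q" if "k \<in> B" for k
  proof -
    define j where "j = k div q"
    define s where "s = k mod q"
    have kjs: "k = j * q + s" using j_def s_def by simp
    have sr: "s \<le> r" using that s_def unfolding B_def by auto
    have "k \<le> n" using that unfolding B_def by auto
    hence "j \<le> d" unfolding j_def using div_le_mono[of k n q] nd by simp
    hence e: "n - k = (d - j) * q + (r - s)" using kjs ndr sr
      by (simp add: diff_mult_distrib)
    have "r - s < q" using rq by simp
    hence m: "(n - k) mod q = r - s" "(n - k) div q = d - j" using e q0 by simp_all
    have "p ^ a dvd n - k" using that assms(8) unfolding B_def by (simp add: dvd_diff_nat)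
    moreover have "1 \<le> n - k" "n - k \<le> n - 1" using that unfolding B_def by auto
    ultimately show ?thesis using m unfolding B_def j_def by auto
  qed
  have F2: "k1 = k2" if "k1 \<in> B" "k2 \<in> B" "k1 div q = k2 div q" for k1 k2
  proof -
    have a1: "k1 = (k1 div q) * q + k1 mod q" "k2 = (k2 div q) * q + k2 mod q" by simp_all
    have b: "k1 mod q < p ^ a" "k2 mod q < p ^ a" using that rp unfolding B_def by auto
    have c: "p ^ a dvd k1" "p ^ a dvd k2" using that unfolding B_def by auto
    have a2: "k2 = (k1 div q) * q + k2 mod q" using a1(2) that(3) by simp
    show ?thesis
    proof (rule ccontr)
      assume ne: "k1 \<noteq> k2"
      show False
      proof (cases "k1 < k2")
        case True
        have "k2 - k1 = k2 mod q - k1 mod q" using a1(1) a2 True by linarith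
        moreover have "p ^ a dvd k2 - k1" using c by (simp add: dvd_diff_nat)
        moreover have "k2 - k1 < p ^ a" "0 < k2 - k1" using b True calculation(1) by linarith+
        ultimately show False by (simp add: nat_dvd_not_less)
      next
        case False
        hence F: "k2 < k1" using ne by simp
        have "k1 - k2 = k1 mod q - k2 mod q" using a1(1) a2 F by linarith
        moreover have "p ^ a dvd k1 - k2" using c by (simp add: dvd_diff_nat)
        moreover have "k1 - k2 < p ^ a" "0 < k1 - k2" using b F calculation(1) by linarith+
        ultimately show False by (simp add: nat_dvd_not_less)
      qed
    qed
  qed
  define h where "h k = min (k div q) (d - k div q)" for k
  have G: "1 \<le> k div q \<and> 1 \<le> d - k div q \<and> n - k \<in> B \<and> k \<le> n" if "k \<in> B" for k
  proof -
    have "n - k \<in> B" and e: "(n - k) div q = d - k div q" using F1[OF that] by auto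
    then have "1 \<le> d - k div q" using F0[of "n - k"] by simp
    moreover have "k \<le> n" using that unfolding B_def by auto
    ultimately show ?thesis using F0[OF that] \<open>n - k \<in> B\<close> by simp
  qed
  have H1: "h k \<in> {1..d div 2}" if "k \<in> B" for k
  proof -
    have g1: "1 \<le> k div q" "1 \<le> d - k div q" using G[OF that] by auto
    have mm: "min j (d - j) \<le> d div 2" for j :: nat by (simp add: min_def) presburger
    have "min (k div q) (d - k div q) \<le> d div 2" by (rule mm)
    moreover have "1 \<le> min (k div q) (d - k div q)" using g1 by simp
    ultimately show ?thesis unfolding h_def by simp
  qed
  have H2: "n choose k1 = n choose k2" if "k1 \<in> B" "k2 \<in> B" "h k1 = h k2" for k1 k2
  proof -
    note hT = that
    have j: "k1 div q \<le> d" "k2 div q \<le> d" using G[OF hT(1)] G[OF hT(2)] by auto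
    have kn: "k2 \<le> n" using G[OF hT(2)] by simp
    have n2: "n - k2 \<in> B" "(n - k2) div q = d - k2 div q" using F1[OF hT(2)] by auto
    consider "k1 div q = k2 div q" | "k1 div q = d - k2 div q"
      using hT(3) j unfolding h_def by linarith
    then show ?thesis
    proof cases
      case 1
      then have "k1 = k2" using F2[OF hT(1) hT(2)] by simp
      then show ?thesis by simp
    next
      case 2
      then have "k1 = n - k2" using F2[OF hT(1) n2(1)] n2(2) by simp
      then show ?thesis using kn binomial_symmetric[OF kn] by simp
    qed
  qed
  define \<phi> where "\<phi> i = n choose (SOME k. k \<in> B \<and> h k = i)" for i
  have CB: "(\<lambda>k. n choose k) ` B \<subseteq> \<phi> ` {1..d div 2}"
  proof
    fix v assume "v \<in> (\<lambda>k. n choose k) ` B"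
    then obtain k where k: "k \<in> B" "v = n choose k" by auto
    define k' where "k' = (SOME k'. k' \<in> B \<and> h k' = h k)"
    have "\<exists>k'. k' \<in> B \<and> h k' = h k" using k by blast
    hence kk: "k' \<in> B \<and> h k' = h k" unfolding k'_def by (rule someI_ex)
    have "\<phi> (h k) = n choose k'" unfolding \<phi>_def k'_def by simp
    also have "\<dots> = v" using H2[of k' k] kk k by simp
    finally have "\<phi> (h k) = v" .
    moreover have "h k \<in> {1..d div 2}" using H1[OF k(1)] .
    ultimately show "v \<in> \<phi> ` {1..d div 2}" by blast
  qed
  have "card ((\<lambda>k. n choose k) ` B) \<le> card (\<phi> ` {1..d div 2})"
    using CB by (intro card_mono) simp_all
  also have "\<dots> \<le> card {1..d div 2}" by (rule card_image_le) simp
  finally have cardCB: "card ((\<lambda>k. n choose k) ` B) \<le> d div 2" by simp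
  define pf where "pf v = (SOME p::nat. prime p \<and> p dvd v)" for v
  have pf: "prime (pf (n choose k)) \<and> pf (n choose k) dvd (n choose k)" if "k \<in> B" for k
  proof -
    have "1 \<le> k" "k < n" using that assms(1) unfolding B_def by auto
    then have "n choose k \<noteq> 1" by (rule binom_ne1)
    then have "\<exists>p::nat. prime p \<and> p dvd (n choose k)" by (rule prime_factor_nat)
    then show ?thesis unfolding pf_def by (rule someI_ex)
  qed
  define S where "S = {p, q} \<union> pf ` ((\<lambda>k. n choose k) ` B)"
  have finB: "finite B" unfolding B_def by (rule finite_subset[of _ "{..n}"]) auto
  have finS: "finite S" unfolding S_def using finB by simp
  have "card S \<le> card {p, q} + card (pf ` ((\<lambda>k. n choose k) ` B))"
    unfolding S_def by (rule card_Un_le)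
  also have "\<dots> \<le> 2 + d div 2"
  proof (rule add_mono)
    show "card {p, q} \<le> 2" by (simp add: card_insert_if)
    have "card (pf ` ((\<lambda>k. n choose k) ` B)) \<le> card ((\<lambda>k. n choose k) ` B)"
      by (rule card_image_le) (use finB in simp)
    then show "card (pf ` ((\<lambda>k. n choose k) ` B)) \<le> d div 2" using cardCB by linarith
  qed
  finally have cS: "card S \<le> 2 + d div 2" .
  have pS: "\<forall>x\<in>S. prime x" unfolding S_def using pf assms(3,6) by auto
  obtain P where P: "finite P" "card P = 2 + d div 2" "S \<subseteq> P" "\<forall>p\<in>P. prime p"
    using extend_primes[OF finS pS cS] by blast
  show ?thesis unfolding condition1_var_def
  proof (intro exI[of _ P] conjI allI impI)
    fix k assume k: "1 \<le> k \<and> k \<le> n - 1"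
    show "\<exists>p\<in>P. p dvd (n choose k)"
    proof (cases "p dvd (n choose k) \<or> q dvd (n choose k)")
      case True
      then show ?thesis using P(3) unfolding S_def by auto
    next
      case False
      have "p ^ a dvd k" using False dvd_binom_pow[OF assms(6) assms(8)] by blast
      moreover have "k mod q \<le> r" using False dvd_binom_mod[OF assms(3)] r_def by (meson not_le)
      ultimately have "k \<in> B" using k unfolding B_def by auto
      then show ?thesis using pf P(3) unfolding S_def by blast
    qed
  qed (use P in auto)
qed

end
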